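(* Let $I\subseteq\mathbb{R}$ be an interval, $p\in\mathbb{N}$, $\mathbf{d}=(d_1,\dots,d_p)\in\mathbb{N}^p$, $\alpha\in\mathbb{N}_p^{\mathbf{d}}$, and let $\mathbf{M}=(M_1,\dots,M_p)$ be a $\mathbf{d}$-averaging mapping on $I$. Assume that the root graph $\mathcal{R}(G_\alpha)$ is ergodic and that each $M_i$ ($i\in\{1,\dots,p\}$) is continuous and strict. Then there exists a unique continuous $\mathbf{M}_\alpha$-invariant mean $K_\alpha\colon I^p\to I$ such that $$\lim_{n\to\infty}\mathbf{M}_\alpha^n=\mathbf{K}_\alpha\quad\text{pointwise on } I^p,$$ where $\mathbf{K}_\alpha\colon I^p\to I^p$, $\mathbf{K}_\alpha=(K_\alpha,\dots,K_\alpha)$, and $K_\alpha$ depends only on the root coordinates: there exists a mean $K_\alpha^*\colon I^{|R(G_\alpha)|}\to I$ such that $K_\alpha(x_1,\dots,x_p)=K^*_\alpha(x_i: i\in R(G_\alpha))$ for all $(x_1,\dots,x_p)\in I^p$.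
   Context: A $k$-variable mean on an interval $I$ is a function $M\colon I^k\to I$ with $\min(x)\le M(x)\le\max(x)$ for all $x\in I^k$; it is strict if both inequalities are strict for every nonconstant $x$. A mean-type mapping is $\mathbf{M}=(M_1,\dots,M_p)\colon I^p\to I^p$ with each $M_i$ a $p$-variable mean; a function $K\colon I^p\to I$ is $\mathbf{M}$-invariant if $K\circ\mathbf{M}=K$. $\mathbf{M}^n$ denotes the $n$-th iterate. Notation: $\mathbb{N}=\{1,2,\dots\}$, $\mathbb{N}_p=\{1,\dots,p\}$, $\mathbb{N}_p^{\mathbf{d}}=\mathbb{N}_p^{d_1}\times\dots\times\mathbb{N}_p^{d_p}$. A $\mathbf{d}$-averaging mapping on $I$ is a sequence $\mathbf{M}=(M_1,\dots,M_p)$ where each $M_i$ is a $d_i$-variable mean on $I$. For $\alpha=(\alpha_1,\dots,\alpha_p)\in\mathbb{N}_p^{\mathbf{d}}$, $\alpha_i=(\alpha_{i,1},\dots,\alpha_{i,d_i})$, define $\mathbf{M}_\alpha\colon I^p\to I^p$ by $\mathbf{M}_\alpha(x_1,\dots,x_p)=\big(M_i(x_{\alpha_{i,1}},\dots,x_{\alpha_{i,d_i}})\big)_{i=1}^p$. The $\alpha$-incidence graph is the digraph $G_\alpha=(\mathbb{N}_p,E_\alpha)$ with $E_\alpha=\{(\alpha_{i,j},i): i\in\mathbb{N}_p,\ j\in\mathbb{N}_{d_i}\}$. Graph notions: a walk is a sequence $(v_0,\dots,v_n)$ with consecutive pairs being edges; $v\leadsto w$ if a walk from $v$ to $w$ exists;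 a digraph is irreducible if $v\leadsto w$ for all vertices $v,w$; a cycle is a nonempty walk whose only repeated vertices are the first and last; a digraph is aperiodic if no integer $k>1$ divides the length of every cycle; ergodic means nonempty, irreducible and aperiodic. The root $R(G)$ of a digraph $G=(V,E)$ is the union of those strongly connected components (classes of $v\sim w\iff v\leadsto w$ and $w\leadsto v$) that receive no edge from a vertex in a different component; the root graph is $\mathcal{R}(G)=(R(G),E\cap(R(G)\times R(G)))$. *)

theory Defs
  imports "HOL-Analysis.Analysis"
begin

text \<open>Points of I^k are represented as functions nat => real in the extensional
  function set PiE {..<k} (\<lambda>_. I) (coordinates indexed 0..k-1, undefined elsewhere).\<close>

definition cube :: "real set \<Rightarrow> nat \<Rightarrow> (nat \<Rightarrow> real) set" where
  "cube I k = PiE {..<k} (\<lambda>_. I)"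

definition mean_on :: "real set \<Rightarrow> nat \<Rightarrow> ((nat \<Rightarrow> real) \<Rightarrow> real) \<Rightarrow> bool" where
  "mean_on I k M \<longleftrightarrow> (\<forall>x\<in>cube I k. M x \<in> I \<and>
      Min (x ` {..<k}) \<le> M x \<and> M x \<le> Max (x ` {..<k}))"

definition strict_mean_on :: "real set \<Rightarrow> nat \<Rightarrow> ((nat \<Rightarrow> real) \<Rightarrow> real) \<Rightarrow> bool" where
  "strict_mean_on I k M \<longleftrightarrow> mean_on I k M \<and>
     (\<forall>x\<in>cube I k. (\<exists>j<k. \<exists>l<k. x j \<noteq> x l) \<longrightarrow>
        Min (x ` {..<k}) < M x \<and> M x < Max (x ` {..<k}))"

definition Malpha :: "(nat \<Rightarrow> (nat \<Rightarrow> real) \<Rightarrow> real) \<Rightarrow> (nat \<Rightarrow> nat) \<Rightarrow> (nat \<Rightarrow> nat \<Rightarrow> nat)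
    \<Rightarrow> nat \<Rightarrow> (nat \<Rightarrow> real) \<Rightarrow> (nat \<Rightarrow> real)" where
  "Malpha M d \<alpha> p x = restrict (\<lambda>i. M i (restrict (\<lambda>j. x (\<alpha> i j)) {..<d i})) {..<p}"

definition Ealpha :: "(nat \<Rightarrow> nat) \<Rightarrow> (nat \<Rightarrow> nat \<Rightarrow> nat) \<Rightarrow> nat \<Rightarrow> (nat \<times> nat) set" where
  "Ealpha d \<alpha> p = {(\<alpha> i j, i) | i j. i < p \<and> j < d i}"

definition strongly_conn :: "('v \<times> 'v) set \<Rightarrow> 'v \<Rightarrow> 'v \<Rightarrow> bool" where
  "strongly_conn E v w \<longleftrightarrow> (v, w) \<in> E\<^sup>* \<and> (w, v) \<in> E\<^sup>*"

text \<open>Root: union of strongly connected components receiving no edge from another component.\<close>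
definition root :: "'v set \<Rightarrow> ('v \<times> 'v) set \<Rightarrow> 'v set" where
  "root V E = {v\<in>V. \<forall>u w. (u, w) \<in> E \<and> strongly_conn E w v \<longrightarrow> strongly_conn E u v}"

definition root_edges :: "'v set \<Rightarrow> ('v \<times> 'v) set \<Rightarrow> ('v \<times> 'v) set" where
  "root_edges V E = E \<inter> (root V E \<times> root V E)"

text \<open>Walks as vertex lists; a cycle is a walk with at least one edge whose only repeated
  vertices are the first and the last; its length is the number of edges.\<close>
definition walk :: "('v \<times> 'v) set \<Rightarrow> 'v list \<Rightarrow> bool" where
  "walk E vs \<longleftrightarrow> vs \<noteq> [] \<and> (\<forall>i. Suc i < length vs \<longrightarrow> (vs ! i, vs ! Suc i) \<in> E)"

definition cycle :: "('v \<times> 'v) set \<Rightarrow> 'v list \<Rightarrow> bool" where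
  "cycle E vs \<longleftrightarrow> walk E vs \<and> length vs \<ge> 2 \<and> hd vs = last vs \<and> distinct (tl vs)"

definition aperiodic :: "('v \<times> 'v) set \<Rightarrow> bool" where
  "aperiodic E \<longleftrightarrow> \<not> (\<exists>k::nat. k > 1 \<and> (\<forall>c. cycle E c \<longrightarrow> k dvd (length c - 1)))"

definition irreducible_graph :: "'v set \<Rightarrow> ('v \<times> 'v) set \<Rightarrow> bool" where
  "irreducible_graph V E \<longleftrightarrow> (\<forall>v\<in>V. \<forall>w\<in>V. (v, w) \<in> E\<^sup>*)"

definition ergodic :: "'v set \<Rightarrow> ('v \<times> 'v) set \<Rightarrow> bool" where
  "ergodic V E \<longleftrightarrow> V \<noteq> {} \<and> irreducible_graph V E \<and> aperiodic E"

end

theory Submission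
  imports Defs
begin


lemma walk_Cons2: "walk E (x # y # xs) \<longleftrightarrow> (x, y) \<in> E \<and> walk E (y # xs)"
  unfolding walk_def
proof safe
  fix i assume "\<forall>i. Suc i < length (x # y # xs) \<longrightarrow> ((x # y # xs) ! i, (x # y # xs) ! Suc i) \<in> E"
    "Suc i < length (y # xs)"
  then show "((y # xs) ! i, (y # xs) ! Suc i) \<in> E" by (metis Suc_less_eq length_Cons nth_Cons_Suc)
next
  assume "\<forall>i. Suc i < length (x # y # xs) \<longrightarrow> ((x # y # xs) ! i, (x # y # xs) ! Suc i) \<in> E"
  then show "(x, y) \<in> E" by (metis length_Cons nth_Cons_0 nth_Cons_Suc zero_less_Suc Suc_less_eq)
next
  fix i assume "(x, y) \<in> E" "\<forall>i. Suc i < length (y # xs) \<longrightarrow> ((y # xs) ! i, (y # xs) ! Suc i) \<in> E"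
    "Suc i < length (x # y # xs)"
  then show "((x # y # xs) ! i, (x # y # xs) ! Suc i) \<in> E"
    by (cases i) auto
qed

lemma walk_relpow:
  "walk E vs \<Longrightarrow> (hd vs, last vs) \<in> E ^^ (length vs - 1)"
proof (induction vs rule: induct_list012)
  case 1 then show ?case by (simp add: walk_def)
next
  case (2 x) then show ?case by simp
next
  case (3 x y zs)
  then have "(x, y) \<in> E" "walk E (y # zs)" by (auto simp: walk_Cons2)
  with 3 have "(y, last (y # zs)) \<in> E ^^ (length (y # zs) - 1)" by simp
  with \<open>(x, y) \<in> E\<close> have "(x, last (y # zs)) \<in> E ^^ Suc (length (y # zs) - 1)" by (rule relpow_Suc_I2)
  then show ?case by simp
qed
lemma relpow_mono': "(R :: ('a \<times> 'a) set) \<subseteq> S \<Longrightarrow> R ^^ n \<subseteq> S ^^ n"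
  by (induction n) (auto simp: relcomp_mono)

locale graph_setup =
  fixes p :: nat and d :: "nat \<Rightarrow> nat" and \<alpha> :: "nat \<Rightarrow> nat \<Rightarrow> nat"
  assumes \<alpha>: "\<And>i j. i < p \<Longrightarrow> j < d i \<Longrightarrow> \<alpha> i j < p"
    and erg: "ergodic (root {..<p} (Ealpha d \<alpha> p)) (root_edges {..<p} (Ealpha d \<alpha> p))"
begin

abbreviation "E \<equiv> Ealpha d \<alpha> p"
abbreviation "R \<equiv> root {..<p} E"

lemma E_bounds: "(u, w) \<in> E \<Longrightarrow> u < p \<and> w < p"
  using \<alpha> by (auto simp: Ealpha_def)

lemma anc_bound: "(u, w) \<in> E\<^sup>* \<Longrightarrow> u = w \<or> u < p"
  by (erule converse_rtranclE) (auto dest: E_bounds)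

lemma sc_trans: "strongly_conn F a b \<Longrightarrow> strongly_conn F b c \<Longrightarrow> strongly_conn F a c"
  unfolding strongly_conn_def by (auto intro: rtrancl_trans)

lemma sc_sym: "strongly_conn F a b \<Longrightarrow> strongly_conn F b a"
  unfolding strongly_conn_def by auto

lemma root_pred: assumes "(u, w) \<in> E" "w \<in> R" shows "u \<in> R"
proof -
  have "strongly_conn E w w" unfolding strongly_conn_def by simp
  then have uw: "strongly_conn E u w"
    using assms unfolding root_def by auto
  show ?thesis unfolding root_def
  proof (intro CollectI conjI allI impI)
    show "u \<in> {..<p}" using E_bounds[OF assms(1)] by simp
    fix u' w' assume h: "(u', w') \<in> E \<and> strongly_conn E w' u"
    then have "strongly_conn E w' w" using sc_trans uw by auto
    then have "strongly_conn E u' w" using assms(2) h unfolding root_def by auto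
    then show "strongly_conn E u' u" using sc_trans[OF _ sc_sym[OF uw]] by auto
  qed
qed

lemma reach_from_root: assumes "v < p" shows "\<exists>r\<in>R. (r, v) \<in> E\<^sup>*"
proof -
  define anc where "anc v = {u. (u, v) \<in> E\<^sup>*}" for v
  have fin: "finite (anc w)" if "w < p" for w
  proof -
    have "anc w \<subseteq> insert w {..<p}"
      unfolding anc_def using anc_bound by auto
    then show ?thesis by (rule finite_subset) simp
  qed
  obtain u where u: "u \<in> anc v" and umin: "\<And>u'. u' \<in> anc v \<Longrightarrow> card (anc u) \<le> card (anc u')"
    using ex_has_least_nat[of "\<lambda>u. u \<in> anc v" v "\<lambda>u. card (anc u)"]
    by (auto simp: anc_def)
  have up: "u < p" using u assms anc_bound unfolding anc_def by auto
  have "u \<in> R" unfolding root_def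
  proof (intro CollectI conjI allI impI)
    show "u \<in> {..<p}" using up by simp
    fix u' w' assume h: "(u', w') \<in> E \<and> strongly_conn E w' u"
    then have u'u: "(u', u) \<in> E\<^sup>*" unfolding strongly_conn_def
      by (meson converse_rtrancl_into_rtrancl)
    have u'p: "u' < p" using h E_bounds by blast
    have sub: "anc u' \<subseteq> anc u" using u'u unfolding anc_def by auto
    have "u' \<in> anc v" using u u'u unfolding anc_def by auto
    then have "card (anc u) \<le> card (anc u')" by (rule umin)
    then have "anc u' = anc u" using sub fin[OF up] by (meson card_seteq)
    then have "(u, u') \<in> E\<^sup>*" unfolding anc_def by auto
    then show "strongly_conn E u' u" using u'u unfolding strongly_conn_def by auto
  qed
  then show ?thesis using u unfolding anc_def by auto
qed

lemma relpow_mult_closed: assumes "(r, r) \<in> E ^^ a" shows "(r, r) \<in> E ^^ (k * a)"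
proof (induction k)
  case 0 show ?case by simp
next
  case (Suc k)
  then have "(r, r) \<in> E ^^ a O E ^^ (k * a)" using assms by blast
  then have "(r, r) \<in> E ^^ (a + k * a)" by (simp only: relpow_add)
  then show ?case by simp
qed

lemma primitive_root: "\<exists>r N0. r \<in> R \<and> (\<forall>n\<ge>N0. (r, r) \<in> E ^^ n)"
proof -
  let ?ER = "root_edges {..<p} E"
  have ERsub: "?ER \<subseteq> E" unfolding root_edges_def by auto
  have ERR: "(u,w) \<in> ?ER \<Longrightarrow> u \<in> R \<and> w \<in> R" for u w unfolding root_edges_def by auto
  from erg obtain r where r: "r \<in> R" unfolding ergodic_def by auto
  have irr: "\<And>v w. v \<in> R \<Longrightarrow> w \<in> R \<Longrightarrow> \<exists>n. (v, w) \<in> E ^^ n"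
  proof -
    fix v w assume "v \<in> R" "w \<in> R"
    then have "(v, w) \<in> ?ER\<^sup>*" using erg unfolding ergodic_def irreducible_graph_def by auto
    then have "(v, w) \<in> E\<^sup>*" using rtrancl_mono[OF ERsub] by auto
    then show "\<exists>n. (v, w) \<in> E ^^ n" by (simp add: rtrancl_power)
  qed
  define L where "L = {n. (r, r) \<in> E ^^ n}"
  have Ladd: "a \<in> L \<Longrightarrow> b \<in> L \<Longrightarrow> a + b \<in> L" for a b
    unfolding L_def by (auto simp: relpow_add)
  have Lmult: "a \<in> L \<Longrightarrow> k * a \<in> L" for a k
    unfolding L_def using relpow_mult_closed by auto
  have L0: "0 \<in> L" unfolding L_def by simp
  have cyc: "\<exists>a. a \<in> L \<and> a + (length c - 1) \<in> L" if "cycle ?ER c" for c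
  proof -
    have w: "walk ?ER c" and l: "length c \<ge> 2" and hl: "hd c = last c"
      using that unfolding cycle_def by auto
    have "(c ! 0, c ! Suc 0) \<in> ?ER" using w l unfolding walk_def by auto
    then have "(hd c, c ! 1) \<in> ?ER" using l by (cases c) auto
    then have hR: "hd c \<in> R" using ERR by blast
    have "(hd c, hd c) \<in> ?ER ^^ (length c - 1)" using walk_relpow[OF w] hl by simp
    then have cl: "(hd c, hd c) \<in> E ^^ (length c - 1)" using relpow_mono'[OF ERsub] by blast
    obtain a b where a: "(r, hd c) \<in> E ^^ a" and b: "(hd c, r) \<in> E ^^ b"
      using irr r hR by blast
    have "a + b \<in> L" using a b unfolding L_def by (auto simp: relpow_add)
    moreover have "(a + b) + (length c - 1) \<in> L"
      proof -
      have "(r, hd c) \<in> E ^^ (a + (length c - 1))" using a cl by (auto simp: relpow_add)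
      then have "(r, r) \<in> E ^^ ((a + (length c - 1)) + b)" using b by (auto simp: relpow_add)
      then show ?thesis by (simp add: algebra_simps L_def)
    qed
    ultimately show ?thesis by blast
  qed
  define P where "P = {c. c > 0 \<and> (\<exists>b. b \<in> L \<and> b + c \<in> L)}"
  have Pne: "P \<noteq> {}"
  proof
    assume P: "P = {}"
    have ap: "aperiodic ?ER" using erg by (simp add: ergodic_def)
    have "\<not> (\<forall>c. cycle ?ER c \<longrightarrow> (2::nat) dvd (length c - 1))"
    proof
      assume "\<forall>c. cycle ?ER c \<longrightarrow> (2::nat) dvd (length c - 1)"
      then show False using ap unfolding aperiodic_def by (meson one_less_numeral_iff semiring_norm(76))
    qed
    then obtain c where cc: "cycle ?ER c" by blast
    then have "length c - 1 > 0" unfolding cycle_def by auto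
    moreover obtain a where "a \<in> L" "a + (length c - 1) \<in> L" using cyc[OF cc] by blast
    ultimately have "length c - 1 \<in> P" unfolding P_def by blast
    then show False using P by simp
  qed
  define g where "g = (LEAST c. c \<in> P)"
  have gP: "g \<in> P" unfolding g_def using Pne by (metis LeastI_ex all_not_in_conv)
  have gmin: "c \<in> P \<Longrightarrow> g \<le> c" for c unfolding g_def by (rule Least_le)
  obtain b0 where b0: "b0 \<in> L" "b0 + g \<in> L" and gpos: "g > 0" using gP unfolding P_def by auto
  have gdvd: "g dvd a" if "a \<in> L" for a
  proof (rule ccontr)
    assume nd: "\<not> g dvd a"
    define q s where "q = a div g" and "s = a mod g"
    have s: "s > 0" "s < g" using nd gpos unfolding s_def by (auto simp: mod_greater_zero_iff_not_dvd)
    have aeq: "a = q * g + s" unfolding q_def s_def by simp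
    have "q * (b0 + g) \<in> L" by (rule Lmult[OF b0(2)])
    moreover have "a + q * b0 \<in> L" by (rule Ladd[OF that Lmult[OF b0(1)]])
    moreover have "a + q * b0 = q * (b0 + g) + s" using aeq by (simp add: algebra_simps)
    ultimately have "s \<in> P" using s unfolding P_def by auto
    then have "g \<le> s" by (rule gmin)
    then show False using s(2) by simp
  qed
  have g1: "g = 1"
  proof (rule ccontr)
    assume "g \<noteq> 1"
    then have "g > 1" using gpos by simp
    moreover have "g dvd (length c - 1)" if cy: "cycle ?ER c" for c
    proof -
      obtain a where "a \<in> L" "a + (length c - 1) \<in> L" using cyc[OF cy] by blast
      then show ?thesis using gdvd by (metis dvd_add_right_iff)
    qed
    moreover have "aperiodic ?ER" using erg by (simp add: ergodic_def)
    ultimately show False unfolding aperiodic_def by blast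
  qed
  have all: "n \<in> L" if "n \<ge> b0 * b0" for n
  proof (cases "b0 = 0")
    case True
    then have "1 \<in> L" using b0 g1 by simp
    then show ?thesis using Lmult[of 1 n] by simp
  next
    case False
    define q s where "q = n div b0" and "s = n mod b0"
    have "s < b0" using False unfolding s_def by simp
    have "b0 * b0 \<le> b0 * q + s" using that unfolding q_def s_def by simp
    then have "b0 \<le> q"
    proof -
      have "b0 * b0 < b0 * (q + 1)" using \<open>b0 * b0 \<le> b0 * q + s\<close> \<open>s < b0\<close> by (simp add: algebra_simps)
      then have "b0 < q + 1" using mult_less_cancel1 by blast
      then show ?thesis by simp
    qed
    have nq: "n = q * b0 + s" unfolding q_def s_def by simp
    have eq: "n = (q - s) * b0 + s * (b0 + 1)"
    proof -
      have sq: "s \<le> q" using \<open>b0 \<le> q\<close> \<open>s < b0\<close> by simp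
      have "(q - s) * b0 + s * b0 = ((q - s) + s) * b0" by (simp add: add_mult_distrib)
      also have "\<dots> = q * b0" using sq by simp
      finally have "(q - s) * b0 + s * b0 = q * b0" .
      then show ?thesis using nq by (simp add: algebra_simps)
    qed
    have "(q - s) * b0 \<in> L" by (rule Lmult[OF b0(1)])
    moreover have "s * (b0 + 1) \<in> L" using Lmult[OF b0(2)] g1 by simp
    ultimately have "(q - s) * b0 + s * (b0 + 1) \<in> L" by (rule Ladd)
    then show ?thesis using eq by simp
  qed
  then have "\<forall>n\<ge>b0 * b0. (r, r) \<in> E ^^ n" unfolding L_def by blast
  then show ?thesis using r by (intro exI[of _ r] exI[of _ "b0 * b0"]) simp
qed

lemma primitive: "\<exists>r N. r \<in> R \<and> (\<forall>i<p. (r, i) \<in> E ^^ N)"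
proof -
  obtain r N0 where r: "r \<in> R" and N0: "\<And>n. n \<ge> N0 \<Longrightarrow> (r, r) \<in> E ^^ n"
    using primitive_root by blast
  let ?ER = "root_edges {..<p} E"
  have "\<exists>b. (r, i) \<in> E ^^ b" if ip: "i < p" for i
  proof -
    obtain r' where r': "r' \<in> R" "(r', i) \<in> E\<^sup>*" using reach_from_root[OF ip] by blast
    have "(r, r') \<in> ?ER\<^sup>*" using erg r r' unfolding ergodic_def irreducible_graph_def by auto
    then have "(r, r') \<in> E\<^sup>*" using rtrancl_mono[of ?ER E] unfolding root_edges_def by auto
    then have "(r, i) \<in> E\<^sup>*" using r' by auto
    then show ?thesis by (simp add: rtrancl_power)
  qed
  then obtain B where B: "\<And>i. i < p \<Longrightarrow> (r, i) \<in> E ^^ B i" by metis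
  define N where "N = N0 + (\<Sum>i<p. B i)"
  have "(r, i) \<in> E ^^ N" if "i < p" for i
  proof -
    have le: "B i \<le> (\<Sum>i<p. B i)" using that by (intro member_le_sum) auto
    have "N = (N - B i) + B i" using le unfolding N_def by simp
    moreover have "(r, r) \<in> E ^^ (N - B i)" using N0 le unfolding N_def by simp
    moreover have "(r, i) \<in> E ^^ B i" using B[OF that] .
    ultimately have "(r, i) \<in> E ^^ (N - B i) O E ^^ B i" by blast
    then show ?thesis using \<open>N = (N - B i) + B i\<close> by (metis relpow_add)
  qed
  then show ?thesis using r by (intro exI[of _ r] exI[of _ N]) simp
qed

end


lemma cube_iff: "x \<in> cube I k \<longleftrightarrow> (\<forall>i<k. x i \<in> I) \<and> (\<forall>i. i \<ge> k \<longrightarrow> x i = undefined)"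
  unfolding cube_def PiE_iff extensional_def by auto

lemma cube_eq: "cube S k = PiE UNIV (\<lambda>i. if i < k then S else {undefined})"
proof (rule set_eqI)
  fix x
  show "x \<in> cube S k \<longleftrightarrow> x \<in> PiE UNIV (\<lambda>i. if i < k then S else {undefined})"
    unfolding cube_iff PiE_iff by (simp add: not_less) blast
qed

lemma compact_cube: assumes "compact S" shows "compact (cube S k)"
proof -
  have "compactin (product_topology (\<lambda>i. euclidean) UNIV) (PiE UNIV (\<lambda>i. if i < k then S else {undefined}))"
    unfolding compactin_PiE using assms by simp
  then show ?thesis unfolding cube_eq euclidean_product_topology by simp
qed

lemma continuous_on_Max_coords:
  assumes "finite A" "A \<noteq> {}"
  shows "continuous_on S (\<lambda>x::nat \<Rightarrow> real. Max (x ` A))"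
  using assms
proof (induction A rule: finite_ne_induct)
  case (singleton a)
  then show ?case by (simp add: continuous_on_subset[OF continuous_on_product_coordinates])
next
  case (insert a B)
  have eq: "(\<lambda>x::nat \<Rightarrow> real. Max (x ` insert a B)) = (\<lambda>x. max (x a) (Max (x ` B)))"
    using insert by (auto simp: Max_insert)
  show ?case unfolding eq
    by (intro continuous_on_max insert.IH continuous_on_subset[OF continuous_on_product_coordinates]) auto
qed

lemma continuous_on_Min_coords:
  assumes "finite A" "A \<noteq> {}"
  shows "continuous_on S (\<lambda>x::nat \<Rightarrow> real. Min (x ` A))"
  using assms
proof (induction A rule: finite_ne_induct)
  case (singleton a)
  then show ?case by (simp add: continuous_on_subset[OF continuous_on_product_coordinates])
next
  case (insert a B)
  have eq: "(\<lambda>x::nat \<Rightarrow> real. Min (x ` insert a B)) = (\<lambda>x. min (x a) (Min (x ` B)))"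
    using insert by (auto simp: Min_insert)
  show ?case unfolding eq
    by (intro continuous_on_min insert.IH continuous_on_subset[OF continuous_on_product_coordinates]) auto
qed

locale mean_setup = graph_setup p d \<alpha>
  for I :: "real set" and p d \<alpha> and M :: "nat \<Rightarrow> (nat \<Rightarrow> real) \<Rightarrow> real" +
  assumes I: "is_interval I"
    and p: "p \<ge> 1"
    and d: "\<And>i. i < p \<Longrightarrow> d i \<ge> 1"
    and mean: "\<And>i. i < p \<Longrightarrow> mean_on I (d i) (M i)"
    and cont: "\<And>i. i < p \<Longrightarrow> continuous_on (cube I (d i)) (M i)"
    and strict: "\<And>i. i < p \<Longrightarrow> strict_mean_on I (d i) (M i)"
begin

abbreviation "F \<equiv> Malpha M d \<alpha> p"
abbreviation "X \<equiv> cube I p"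
definition mx :: "(nat \<Rightarrow> real) \<Rightarrow> real" where "mx x = Max (x ` {..<p})"
definition mn :: "(nat \<Rightarrow> real) \<Rightarrow> real" where "mn x = Min (x ` {..<p})"
definition "inp x i = restrict (\<lambda>j. x (\<alpha> i j)) {..<d i}"

lemma F_apply: "i < p \<Longrightarrow> F x i = M i (inp x i)"
  unfolding Malpha_def inp_def by simp

lemma inp_cube: "x \<in> X \<Longrightarrow> i < p \<Longrightarrow> inp x i \<in> cube I (d i)"
  unfolding inp_def cube_iff using \<alpha> by auto

lemma inp_image: "inp x i ` {..<d i} = (\<lambda>j. x (\<alpha> i j)) ` {..<d i}"
  unfolding inp_def by auto

lemma F_X: assumes "x \<in> X" shows "F x \<in> X"
  unfolding cube_iff[of "F x"]
proof safe
  fix i assume i: "i < p"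
  have "M i (inp x i) \<in> I" using mean[OF i] inp_cube[OF assms i] unfolding mean_on_def by blast
  then show "F x i \<in> I" using F_apply[OF i] by simp
next
  fix i assume "p \<le> i" then show "F x i = undefined" unfolding Malpha_def by simp
qed

lemma Fn_X: "x \<in> X \<Longrightarrow> (F ^^ n) x \<in> X"
  by (induction n) (auto simp: F_X)

lemma F_le: assumes "x \<in> X" "i < p" "\<And>j. j < d i \<Longrightarrow> x (\<alpha> i j) \<le> m"
  shows "F x i \<le> m"
proof -
  have "(0::nat) \<in> {..<d i}" using d[OF assms(2)] by simp
  then have ne: "(\<lambda>j. x (\<alpha> i j)) ` {..<d i} \<noteq> {}" by blast
  have "F x i \<le> Max (inp x i ` {..<d i})"
    using mean[OF assms(2)] inp_cube[OF assms(1,2)] unfolding mean_on_def F_apply[OF assms(2)] by blast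
  also have "\<dots> \<le> m" unfolding inp_image using ne assms(3) by (subst Max_le_iff) auto
  finally show ?thesis .
qed

lemma F_ge: assumes "x \<in> X" "i < p" "\<And>j. j < d i \<Longrightarrow> m \<le> x (\<alpha> i j)"
  shows "m \<le> F x i"
proof -
  have "(0::nat) \<in> {..<d i}" using d[OF assms(2)] by simp
  then have ne: "(\<lambda>j. x (\<alpha> i j)) ` {..<d i} \<noteq> {}" by blast
  have "m \<le> Min (inp x i ` {..<d i})" unfolding inp_image using ne assms(3) by (subst Min_ge_iff) auto
  also have "\<dots> \<le> F x i"
    using mean[OF assms(2)] inp_cube[OF assms(1,2)] unfolding mean_on_def F_apply[OF assms(2)] by blast
  finally show ?thesis .
qed

lemma F_lt: assumes "x \<in> X" "i < p" "\<And>j. j < d i \<Longrightarrow> x (\<alpha> i j) \<le> m"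
    and "j0 < d i" "x (\<alpha> i j0) < m"
  shows "F x i < m"
proof -
  let ?Y = "inp x i ` {..<d i}"
  have ne: "?Y \<noteq> {}" using assms(4) by auto
  have fin: "finite ?Y" by simp
  have Mle: "Max ?Y \<le> m" unfolding inp_image using ne assms(3) by (subst Max_le_iff) (auto simp: inp_image)
  have Fle: "F x i \<le> Max ?Y"
    using mean[OF assms(2)] inp_cube[OF assms(1,2)] unfolding mean_on_def F_apply[OF assms(2)] by blast
  show ?thesis
  proof (cases "Max ?Y < m")
    case True then show ?thesis using Fle by simp
  next
    case False
    then have Meq: "Max ?Y = m" using Mle by simp
    obtain j1 where j1: "j1 < d i" "inp x i j1 = Max ?Y" using Max_in[OF fin ne] by auto
    have "inp x i j0 < m" using assms(4,5) unfolding inp_def by simp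
    then have "inp x i j1 \<noteq> inp x i j0" using j1 Meq by simp
    from this have "F x i < Max ?Y"
    proof -
      assume ne2: "inp x i j1 \<noteq> inp x i j0"
      have ex: "\<exists>j<d i. \<exists>l<d i. inp x i j \<noteq> inp x i l" using ne2 j1(1) assms(4) by blast
      have "\<forall>y\<in>cube I (d i). (\<exists>j<d i. \<exists>l<d i. y j \<noteq> y l) \<longrightarrow>
          Min (y ` {..<d i}) < M i y \<and> M i y < Max (y ` {..<d i})"
        using strict[OF assms(2)] unfolding strict_mean_on_def by blast
      then have "Min ?Y < M i (inp x i) \<and> M i (inp x i) < Max ?Y"
        using inp_cube[OF assms(1,2)] ex by blast
      then show ?thesis using F_apply[OF assms(2)] by simp
    qed
    then show ?thesis using Meq by simp
  qed
qed

lemma F_gt: assumes "x \<in> X" "i < p" "\<And>j. j < d i \<Longrightarrow> m \<le> x (\<alpha> i j)"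
    and "j0 < d i" "m < x (\<alpha> i j0)"
  shows "m < F x i"
proof -
  let ?Y = "inp x i ` {..<d i}"
  have ne: "?Y \<noteq> {}" using assms(4) by auto
  have fin: "finite ?Y" by simp
  have Mle: "m \<le> Min ?Y" unfolding inp_image using ne assms(3) by (subst Min_ge_iff) (auto simp: inp_image)
  have Fle: "Min ?Y \<le> F x i"
    using mean[OF assms(2)] inp_cube[OF assms(1,2)] unfolding mean_on_def F_apply[OF assms(2)] by blast
  show ?thesis
  proof (cases "m < Min ?Y")
    case True then show ?thesis using Fle by simp
  next
    case False
    then have Meq: "Min ?Y = m" using Mle by simp
    obtain j1 where j1: "j1 < d i" "inp x i j1 = Min ?Y" using Min_in[OF fin ne] by auto
    have "m < inp x i j0" using assms(4,5) unfolding inp_def by simp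
    then have "inp x i j1 \<noteq> inp x i j0" using j1 Meq by simp
    from this have "Min ?Y < F x i"
    proof -
      assume ne2: "inp x i j1 \<noteq> inp x i j0"
      have ex: "\<exists>j<d i. \<exists>l<d i. inp x i j \<noteq> inp x i l" using ne2 j1(1) assms(4) by blast
      have "\<forall>y\<in>cube I (d i). (\<exists>j<d i. \<exists>l<d i. y j \<noteq> y l) \<longrightarrow>
          Min (y ` {..<d i}) < M i y \<and> M i y < Max (y ` {..<d i})"
        using strict[OF assms(2)] unfolding strict_mean_on_def by blast
      then have "Min ?Y < M i (inp x i) \<and> M i (inp x i) < Max ?Y"
        using inp_cube[OF assms(1,2)] ex by blast
      then show ?thesis using F_apply[OF assms(2)] by simp
    qed
    then show ?thesis using Meq by simp
  qed
qed

lemma ne_p: "{..<p} \<noteq> {}"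
proof -
  have "(0::nat) \<in> {..<p}" using p by simp
  then show ?thesis by blast
qed

lemma mn_le: "i < p \<Longrightarrow> mn x \<le> x i" unfolding mn_def by simp
lemma le_mx: "i < p \<Longrightarrow> x i \<le> mx x" unfolding mx_def by simp
lemma mx_in: "\<exists>i<p. x i = mx x"
proof -
  have "Max (x ` {..<p}) \<in> x ` {..<p}" using ne_p by (intro Max_in) auto
  then show ?thesis unfolding mx_def by force
qed
lemma mn_in: "\<exists>i<p. x i = mn x"
proof -
  have "Min (x ` {..<p}) \<in> x ` {..<p}" using ne_p by (intro Min_in) auto
  then show ?thesis unfolding mn_def by force
qed
lemma mx_le_iff: "mx x \<le> m \<longleftrightarrow> (\<forall>i<p. x i \<le> m)" unfolding mx_def using ne_p by (subst Max_le_iff) auto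
lemma mx_less_iff: "mx x < m \<longleftrightarrow> (\<forall>i<p. x i < m)" unfolding mx_def using ne_p by (subst Max_less_iff) auto
lemma mn_ge_iff: "m \<le> mn x \<longleftrightarrow> (\<forall>i<p. m \<le> x i)" unfolding mn_def using ne_p by (subst Min_ge_iff) auto
lemma mn_gt_iff: "m < mn x \<longleftrightarrow> (\<forall>i<p. m < x i)" unfolding mn_def using ne_p by (subst Min_gr_iff) auto
lemma mn_le_mx: "mn x \<le> mx x"
proof -
  have "0 < p" using p by simp
  then show ?thesis using mn_le[of 0 x] le_mx[of 0 x] by simp
qed

lemma F_bounds: assumes "x \<in> X" "i < p" shows "mn x \<le> F x i" "F x i \<le> mx x"
proof -
  show "mn x \<le> F x i" by (rule F_ge[OF assms]) (simp add: mn_le \<alpha> assms(2))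
  show "F x i \<le> mx x" by (rule F_le[OF assms]) (simp add: le_mx \<alpha> assms(2))
qed

lemma mx_F: "x \<in> X \<Longrightarrow> mx (F x) \<le> mx x"
  unfolding mx_le_iff[of "F x"] using F_bounds(2) by simp
lemma mn_F: "x \<in> X \<Longrightarrow> mn x \<le> mn (F x)"
  unfolding mn_ge_iff[of _ "F x"] using F_bounds(1) by simp

lemma mx_Fn: "x \<in> X \<Longrightarrow> mx ((F ^^ n) x) \<le> mx x"
proof (induction n)
  case (Suc n)
  have "mx ((F ^^ Suc n) x) \<le> mx ((F ^^ n) x)" using mx_F[OF Fn_X[OF Suc.prems]] by simp
  then show ?case using Suc by simp
qed simp

lemma mn_Fn: "x \<in> X \<Longrightarrow> mn x \<le> mn ((F ^^ n) x)"
proof (induction n)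
  case (Suc n)
  have "mn ((F ^^ n) x) \<le> mn ((F ^^ Suc n) x)" using mn_F[OF Fn_X[OF Suc.prems]] by simp
  then show ?case using Suc by simp
qed simp

end


context mean_setup begin

lemma step_lt:
  assumes x: "x \<in> X" and "(u, i) \<in> E ^^ n" "u < p" "x u < mx x"
  shows "(F ^^ n) x i < mx x"
  using assms(2-4)
proof (induction n arbitrary: i)
  case 0 then show ?case by simp
next
  case (Suc n)
  from Suc.prems(1) obtain v where uv: "(u, v) \<in> E ^^ n" and vi: "(v, i) \<in> E" by (rule relpow_Suc_E)
  from vi obtain j0 where i: "i < p" and j0: "j0 < d i" and v: "v = \<alpha> i j0"
    unfolding Ealpha_def by blast
  let ?y = "(F ^^ n) x"
  have y: "?y \<in> X" by (rule Fn_X[OF x])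
  have IH: "?y v < mx x" using Suc.IH[OF uv Suc.prems(2,3)] .
  have bnd: "?y (\<alpha> i j) \<le> mx x" if "j < d i" for j
    using le_mx[OF \<alpha>[OF i that], of ?y] mx_Fn[OF x, of n] by simp
  have "F ?y i < mx x" by (rule F_lt[OF y i bnd j0]) (use IH v in simp_all)
  then show ?case by simp
qed

lemma step_gt:
  assumes x: "x \<in> X" and "(u, i) \<in> E ^^ n" "u < p" "mn x < x u"
  shows "mn x < (F ^^ n) x i"
  using assms(2-4)
proof (induction n arbitrary: i)
  case 0 then show ?case by simp
next
  case (Suc n)
  from Suc.prems(1) obtain v where uv: "(u, v) \<in> E ^^ n" and vi: "(v, i) \<in> E" by (rule relpow_Suc_E)
  from vi obtain j0 where i: "i < p" and j0: "j0 < d i" and v: "v = \<alpha> i j0"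
    unfolding Ealpha_def by blast
  let ?y = "(F ^^ n) x"
  have y: "?y \<in> X" by (rule Fn_X[OF x])
  have IH: "mn x < ?y v" using Suc.IH[OF uv Suc.prems(2,3)] .
  have bnd: "mn x \<le> ?y (\<alpha> i j)" if "j < d i" for j
    using mn_le[OF \<alpha>[OF i that], of ?y] mn_Fn[OF x, of n] by simp
  have "mn x < F ?y i" by (rule F_gt[OF y i bnd j0]) (use IH v in simp_all)
  then show ?case by simp
qed

definition D :: "(nat \<Rightarrow> real) \<Rightarrow> real" where "D x = mx x - mn x"

lemma D_nonneg: "0 \<le> D x" unfolding D_def using mn_le_mx[of x] by simp

lemma D_Fn: "x \<in> X \<Longrightarrow> D ((F ^^ n) x) \<le> D x"
  unfolding D_def using mx_Fn[of x n] mn_Fn[of x n] by simp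

lemma contraction: "\<exists>N. \<forall>x\<in>X. mn x < mx x \<longrightarrow> D ((F ^^ N) x) < D x"
proof -
  obtain r N where r: "r \<in> R" and N: "\<And>i. i < p \<Longrightarrow> (r, i) \<in> E ^^ N"
    using primitive by blast
  have rp: "r < p" using r unfolding root_def by simp
  have "D ((F ^^ N) x) < D x" if x: "x \<in> X" and nc: "mn x < mx x" for x
  proof (cases "x r < mx x")
    case True
    then have "\<forall>i<p. (F ^^ N) x i < mx x" using step_lt[OF x N rp] by blast
    then have "mx ((F ^^ N) x) < mx x" using mx_less_iff by blast
    then show ?thesis using mn_Fn[OF x, of N] unfolding D_def by simp
  next
    case False
    then have "mn x < x r" using le_mx[OF rp, of x] nc by simp
    then have "\<forall>i<p. mn x < (F ^^ N) x i" using step_gt[OF x N rp] by blast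
    then have "mn x < mn ((F ^^ N) x)" using mn_gt_iff by blast
    then show ?thesis using mx_Fn[OF x, of N] unfolding D_def by simp
  qed
  then show ?thesis by blast
qed

lemma cont_F: "continuous_on X F"
proof (rule continuous_on_coordinatewise_then_product)
  fix i
  show "continuous_on X (\<lambda>x. F x i)"
  proof (cases "i < p")
    case True
    have ci: "continuous_on X (\<lambda>x. inp x i)"
    proof (rule continuous_on_coordinatewise_then_product)
      fix j
      show "continuous_on X (\<lambda>x. inp x i j)"
        unfolding inp_def by (cases "j < d i")
          (simp_all add: continuous_on_subset[OF continuous_on_product_coordinates])
    qed
    have "continuous_on X (\<lambda>x. M i (inp x i))"
      by (rule continuous_on_compose2[OF cont[OF True] ci]) (use inp_cube True in blast)
    then show ?thesis using F_apply[OF True] by simp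
  next
    case False
    then show ?thesis unfolding Malpha_def by simp
  qed
qed

lemma cont_Fn: "continuous_on X (F ^^ n)"
proof (induction n)
  case 0 then show ?case by (simp add: continuous_on_id)
next
  case (Suc n)
  have "continuous_on X (\<lambda>x. F ((F ^^ n) x))"
    by (rule continuous_on_compose2[OF cont_F Suc]) (use Fn_X in blast)
  then show ?case by (simp add: comp_def)
qed

lemma cont_mx: "continuous_on S mx"
  unfolding mx_def[abs_def] by (rule continuous_on_Max_coords) (simp_all add: ne_p)
lemma cont_mn: "continuous_on S mn"
  unfolding mn_def[abs_def] by (rule continuous_on_Min_coords) (simp_all add: ne_p)
lemma cont_D: "continuous_on S D"
  unfolding D_def[abs_def] by (intro continuous_on_diff cont_mx cont_mn)

end


context mean_setup begin

lemma D_small: assumes x: "x \<in> X" and e: "e > 0" shows "\<exists>n. D ((F ^^ n) x) < e"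
proof -
  obtain N where N: "\<And>y. y \<in> X \<Longrightarrow> mn y < mx y \<Longrightarrow> D ((F ^^ N) y) < D y"
    using contraction by blast
  define a where "a = mn x"
  define b where "b = mx x"
  define C where "C = cube {a..b} p"
  have xI: "\<And>i. i < p \<Longrightarrow> x i \<in> I" using x unfolding cube_iff by blast
  have aI: "a \<in> I" using mn_in[of x] xI unfolding a_def by metis
  have bI: "b \<in> I" using mx_in[of x] xI unfolding b_def by metis
  have abI: "{a..b} \<subseteq> I" using mem_is_interval_1_I[OF I aI bI] by auto
  have CX: "C \<subseteq> X"
  proof
    fix y assume "y \<in> C" then show "y \<in> X" using abI unfolding C_def cube_iff by auto
  qed
  have FC: "F y \<in> C" if y: "y \<in> C" for y
  proof -
    have yX: "y \<in> X" using y CX by blast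
    have yab: "\<And>i. i < p \<Longrightarrow> y i \<in> {a..b}" using y unfolding C_def cube_iff by blast
    have "a \<le> mn y" using yab mn_ge_iff by auto
    moreover have "mx y \<le> b" using yab mx_le_iff by auto
    ultimately have "\<And>i. i < p \<Longrightarrow> F y i \<in> {a..b}" using F_bounds[OF yX] by fastforce
    moreover have "\<And>i. i \<ge> p \<Longrightarrow> F y i = undefined" using F_X[OF yX] unfolding cube_iff by blast
    ultimately show ?thesis unfolding C_def cube_iff by blast
  qed
  have FnC: "(F ^^ n) y \<in> C" if "y \<in> C" for y n
    using that by (induction n) (auto simp: FC)
  have xC: "x \<in> C" unfolding C_def cube_iff using x mn_le le_mx unfolding a_def b_def cube_iff by auto
  have cC: "compact C" unfolding C_def by (rule compact_cube) simp
  define S where "S = C \<inter> {y. e \<le> D y}"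
  have "closed {y. e \<le> D y}" by (rule closed_Collect_le) (simp_all add: cont_D)
  then have cS: "compact S" unfolding S_def using cC by (rule compact_Int_closed[rotated])
  show ?thesis
  proof (cases "S = {}")
    case True
    then have "D x < e" using xC unfolding S_def by auto
    then show ?thesis by (intro exI[of _ 0]) simp
  next
    case False
    define \<phi> where "\<phi> y = D y - D ((F ^^ N) y)" for y
    have SX: "S \<subseteq> X" using CX unfolding S_def by blast
    have "continuous_on S (\<lambda>y. D ((F ^^ N) y))"
      by (rule continuous_on_compose2[OF cont_D[of UNIV] continuous_on_subset[OF cont_Fn SX]]) simp
    then have cphi: "continuous_on S \<phi>" unfolding \<phi>_def[abs_def]
      by (intro continuous_on_diff cont_D)
    obtain y0 where y0: "y0 \<in> S" and y0min: "\<And>y. y \<in> S \<Longrightarrow> \<phi> y0 \<le> \<phi> y"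
      using continuous_attains_inf[OF cS False cphi] by blast
    define \<delta> where "\<delta> = \<phi> y0"
    have "mn y0 < mx y0" using y0 e unfolding S_def D_def by auto
    then have dpos: "\<delta> > 0" using N y0 SX unfolding \<delta>_def \<phi>_def by fastforce
    have claim: "D ((F ^^ (k * N)) x) < e \<or> D ((F ^^ (k * N)) x) \<le> D x - real k * \<delta>" for k
    proof (induction k)
      case 0 then show ?case by simp
    next
      case (Suc k)
      define z where "z = (F ^^ (k * N)) x"
      have zC: "z \<in> C" unfolding z_def by (rule FnC[OF xC])
      have zX: "z \<in> X" using zC CX by blast
      have eq: "(F ^^ (Suc k * N)) x = (F ^^ N) z"
        unfolding z_def by (simp add: funpow_add)
      show ?case
      proof (cases "D z < e")
        case True
        then show ?thesis using D_Fn[OF zX, of N] unfolding eq by simp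
      next
        case False
        then have "z \<in> S" using zC unfolding S_def by simp
        then have "\<delta> \<le> \<phi> z" using y0min unfolding \<delta>_def by blast
        moreover have "D z \<le> D x - real k * \<delta>" using Suc.IH False unfolding z_def by simp
        ultimately show ?thesis unfolding eq \<phi>_def by (simp add: algebra_simps)
      qed
    qed
    obtain k where k: "D x < real k * \<delta>" using reals_Archimedean3[OF dpos] by blast
    have "D ((F ^^ (k * N)) x) < e" using claim[of k] k D_nonneg[of "(F ^^ (k * N)) x"] by linarith
    then show ?thesis by blast
  qed
qed

lemma D_tendsto: assumes x: "x \<in> X" shows "(\<lambda>n. D ((F ^^ n) x)) \<longlonglongrightarrow> 0"
proof (rule LIMSEQ_I)
  fix r :: real assume r: "r > 0"
  obtain n0 where n0: "D ((F ^^ n0) x) < r" using D_small[OF x r] by blast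
  have "norm (D ((F ^^ n) x) - 0) < r" if "n \<ge> n0" for n
  proof -
    have eq: "(F ^^ n) x = (F ^^ (n - n0)) ((F ^^ n0) x)"
      using that by (metis funpow_add le_add_diff_inverse2 o_apply)
    have "D ((F ^^ n) x) \<le> D ((F ^^ n0) x)" unfolding eq by (rule D_Fn[OF Fn_X[OF x]])
    then show ?thesis using n0 D_nonneg[of "(F ^^ n) x"] by simp
  qed
  then show "\<exists>no. \<forall>n\<ge>no. norm (D ((F ^^ n) x) - 0) < r" by blast
qed

definition K :: "(nat \<Rightarrow> real) \<Rightarrow> real" where "K x = lim (\<lambda>n. mx ((F ^^ n) x))"

lemma mx_dec: "x \<in> X \<Longrightarrow> decseq (\<lambda>n. mx ((F ^^ n) x))"
  unfolding decseq_Suc_iff using mx_F[OF Fn_X] by simp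

lemma mn_inc: "x \<in> X \<Longrightarrow> incseq (\<lambda>n. mn ((F ^^ n) x))"
  unfolding incseq_Suc_iff using mn_F[OF Fn_X] by simp

lemma K_mx: assumes x: "x \<in> X" shows "(\<lambda>n. mx ((F ^^ n) x)) \<longlonglongrightarrow> K x"
proof -
  have "\<forall>n. mn x \<le> mx ((F ^^ n) x)" using mn_Fn[OF x] mn_le_mx order_trans by blast
  then obtain L where L: "(\<lambda>n. mx ((F ^^ n) x)) \<longlonglongrightarrow> L"
    using decseq_convergent[OF mx_dec[OF x]] by blast
  then have "K x = L" unfolding K_def by (rule limI)
  then show ?thesis using L by simp
qed

lemma K_mn: assumes x: "x \<in> X" shows "(\<lambda>n. mn ((F ^^ n) x)) \<longlonglongrightarrow> K x"
proof -
  have "(\<lambda>n. mx ((F ^^ n) x) - D ((F ^^ n) x)) \<longlonglongrightarrow> K x - 0"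
    by (intro tendsto_diff K_mx D_tendsto x)
  then show ?thesis unfolding D_def by simp
qed

lemma K_le: "x \<in> X \<Longrightarrow> K x \<le> mx ((F ^^ n) x)"
  using decseq_ge[OF mx_dec K_mx] by blast

lemma K_ge: "x \<in> X \<Longrightarrow> mn ((F ^^ n) x) \<le> K x"
  using incseq_le[OF mn_inc K_mn] by blast

lemma K_coord: assumes x: "x \<in> X" and i: "i < p" shows "(\<lambda>n. (F ^^ n) x i) \<longlonglongrightarrow> K x"
  by (rule real_tendsto_sandwich[OF _ _ K_mn[OF x] K_mx[OF x]])
     (simp_all add: mn_le[OF i] le_mx[OF i])

lemma K_cont: "continuous_on X K"
  unfolding continuous_on_topological
proof (intro ballI allI impI)
  fix x B assume x: "x \<in> X" and B: "open B" "K x \<in> B"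
  obtain e where e: "e > 0" "ball (K x) e \<subseteq> B" using B openE by blast
  obtain n1 where n1: "mx ((F ^^ n1) x) < K x + e"
  proof -
    have "eventually (\<lambda>n. mx ((F ^^ n) x) < K x + e) sequentially"
      by (rule order_tendstoD(2)[OF K_mx[OF x]]) (use e(1) in linarith)
    then have "\<exists>n0. \<forall>m\<ge>n0. mx ((F ^^ m) x) < K x + e" unfolding eventually_sequentially .
    then show ?thesis using that by blast
  qed
  obtain n2 where n2: "K x - e < mn ((F ^^ n2) x)"
  proof -
    have "eventually (\<lambda>n. K x - e < mn ((F ^^ n) x)) sequentially"
      by (rule order_tendstoD(1)[OF K_mn[OF x]]) (use e(1) in linarith)
    then have "\<exists>n0. \<forall>m\<ge>n0. K x - e < mn ((F ^^ m) x)" unfolding eventually_sequentially .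
    then show ?thesis using that by blast
  qed
  have c1: "continuous_on X (\<lambda>y. mx ((F ^^ n1) y))"
    by (rule continuous_on_compose2[OF cont_mx[of UNIV] cont_Fn]) simp
  have c2: "continuous_on X (\<lambda>y. mn ((F ^^ n2) y))"
    by (rule continuous_on_compose2[OF cont_mn[of UNIV] cont_Fn]) simp
  have "\<forall>B. open B \<longrightarrow> mx ((F ^^ n1) x) \<in> B \<longrightarrow> (\<exists>A. open A \<and> x \<in> A \<and> (\<forall>y\<in>X. y \<in> A \<longrightarrow> mx ((F ^^ n1) y) \<in> B))"
    using c1 x unfolding continuous_on_topological by blast
  note H1 = this[rule_format, OF open_lessThan]
  have "\<exists>A. open A \<and> x \<in> A \<and> (\<forall>y\<in>X. y \<in> A \<longrightarrow> mx ((F ^^ n1) y) \<in> {..<K x + e})"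
    by (rule H1) (use n1 in simp)
  then obtain A1 where A1: "open A1" "x \<in> A1" "\<And>y. y \<in> X \<Longrightarrow> y \<in> A1 \<Longrightarrow> mx ((F ^^ n1) y) \<in> {..<K x + e}"
    by blast
  have "\<forall>B. open B \<longrightarrow> mn ((F ^^ n2) x) \<in> B \<longrightarrow> (\<exists>A. open A \<and> x \<in> A \<and> (\<forall>y\<in>X. y \<in> A \<longrightarrow> mn ((F ^^ n2) y) \<in> B))"
    using c2 x unfolding continuous_on_topological by blast
  note H2 = this[rule_format, OF open_greaterThan]
  have "\<exists>A. open A \<and> x \<in> A \<and> (\<forall>y\<in>X. y \<in> A \<longrightarrow> mn ((F ^^ n2) y) \<in> {K x - e<..})"
    by (rule H2) (use n2 in simp)
  then obtain A2 where A2: "open A2" "x \<in> A2" "\<And>y. y \<in> X \<Longrightarrow> y \<in> A2 \<Longrightarrow> mn ((F ^^ n2) y) \<in> {K x - e<..}"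
    by blast
  show "\<exists>A. open A \<and> x \<in> A \<and> (\<forall>y\<in>X. y \<in> A \<longrightarrow> K y \<in> B)"
  proof (intro exI[of _ "A1 \<inter> A2"] conjI ballI impI)
    show "open (A1 \<inter> A2)" using A1 A2 by auto
    show "x \<in> A1 \<inter> A2" using A1 A2 by auto
    fix y assume y: "y \<in> X" "y \<in> A1 \<inter> A2"
    have "K y < K x + e" using K_le[OF y(1), of n1] A1(3)[OF y(1)] y(2) by fastforce
    moreover have "K x - e < K y" using K_ge[OF y(1), of n2] A2(3)[OF y(1)] y(2) by fastforce
    ultimately have "K y \<in> ball (K x) e" by (simp add: dist_real_def abs_if)
    then show "K y \<in> B" using e by blast
  qed
qed

end


context mean_setup begin

lemma R_sub: "R \<subseteq> {..<p}" unfolding root_def by auto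
lemma R_fin: "finite R" using R_sub finite_subset by blast
lemma R_ne: "R \<noteq> {}" using erg unfolding ergodic_def by blast

lemma agree_Fn:
  assumes x: "x \<in> X" and x': "x' \<in> X" and ag: "\<And>i. i \<in> R \<Longrightarrow> x i = x' i"
  shows "i \<in> R \<Longrightarrow> (F ^^ n) x i = (F ^^ n) x' i"
proof (induction n arbitrary: i)
  case 0 then show ?case using ag by simp
next
  case (Suc n)
  have ip: "i < p" using Suc.prems R_sub by blast
  have "inp ((F ^^ n) x) i = inp ((F ^^ n) x') i"
    unfolding inp_def
  proof (rule restrict_ext)
    fix j assume "j \<in> {..<d i}"
    then have "(\<alpha> i j, i) \<in> E" using ip unfolding Ealpha_def by blast
    then have "\<alpha> i j \<in> R" using root_pred Suc.prems by blast
    then show "(F ^^ n) x (\<alpha> i j) = (F ^^ n) x' (\<alpha> i j)" by (rule Suc.IH)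
  qed
  then show ?case using F_apply[OF ip] by simp
qed

lemma K_agree:
  assumes x: "x \<in> X" and x': "x' \<in> X" and ag: "\<And>i. i \<in> R \<Longrightarrow> x i = x' i"
  shows "K x = K x'"
proof -
  obtain r where r: "r \<in> R" using R_ne by blast
  have rp: "r < p" using r R_sub by blast
  have "(\<lambda>n. (F ^^ n) x r) = (\<lambda>n. (F ^^ n) x' r)" using agree_Fn[OF x x' ag r] by simp
  then have l: "(\<lambda>n. (F ^^ n) x' r) \<longlonglongrightarrow> K x" using K_coord[OF x rp] by simp
  show ?thesis by (rule LIMSEQ_unique[OF l K_coord[OF x' rp]])
qed

lemma K_mean: "mean_on I p K"
  unfolding mean_on_def
proof (intro ballI conjI)
  fix x assume x: "x \<in> X"
  have a: "mn x \<le> K x" using K_ge[OF x, of 0] by simp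
  have b: "K x \<le> mx x" using K_le[OF x, of 0] by simp
  have xI: "\<And>i. i < p \<Longrightarrow> x i \<in> I" using x unfolding cube_iff by blast
  have aI: "mn x \<in> I" using mn_in[of x] xI by metis
  have bI: "mx x \<in> I" using mx_in[of x] xI by metis
  show "K x \<in> I" by (rule mem_is_interval_1_I[OF I aI bI a b])
  show "Min (x ` {..<p}) \<le> K x" using a unfolding mn_def .
  show "K x \<le> Max (x ` {..<p})" using b unfolding mx_def .
qed

lemma K_inv: "x \<in> X \<Longrightarrow> K (F x) = K x"
proof -
  assume x: "x \<in> X"
  have p0: "0 < p" using p by simp
  have "(\<lambda>n. (F ^^ Suc n) x 0) \<longlonglongrightarrow> K x"
    using K_coord[OF x p0] by (rule LIMSEQ_Suc)
  moreover have "(\<lambda>n. (F ^^ Suc n) x 0) = (\<lambda>n. (F ^^ n) (F x) 0)"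
    by (simp add: funpow_Suc_right del: funpow.simps)
  ultimately have "(\<lambda>n. (F ^^ n) (F x) 0) \<longlonglongrightarrow> K x" by simp
  then show ?thesis using K_coord[OF F_X[OF x] p0] LIMSEQ_unique by blast
qed

definition "sl = sorted_list_of_set R"
definition "kR = card R"
definition "ext y = restrict (\<lambda>i. if \<exists>j<kR. sl ! j = i then y (SOME j. j < kR \<and> sl ! j = i) else y 0) {..<p}"
definition "Ks y = K (ext y)"

lemma sl_props: "set sl = R" "length sl = kR" "kR > 0"
  unfolding sl_def kR_def using R_fin R_ne by (auto simp: card_gt_0_iff)

lemma ext_val: assumes "i < p" shows "\<exists>j<kR. ext y i = y j"
proof (cases "\<exists>j<kR. sl ! j = i")
  case True
  then have "(SOME j. j < kR \<and> sl ! j = i) < kR" using someI_ex[OF True] by blast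
  then show ?thesis using True assms unfolding ext_def by auto
next
  case False
  then show ?thesis using assms sl_props(3) unfolding ext_def by auto
qed

lemma ext_X: assumes y: "y \<in> cube I kR" shows "ext y \<in> X"
  unfolding cube_iff
proof safe
  fix i assume "i < p"
  then obtain j where "j < kR" "ext y i = y j" using ext_val by blast
  then show "ext y i \<in> I" using y unfolding cube_iff by auto
next
  fix i assume "p \<le> i" then show "ext y i = undefined" unfolding ext_def by simp
qed

lemma ext_agree:
  assumes "i \<in> R" shows "ext (restrict (\<lambda>j. x (sl ! j)) {..<kR}) i = x i"
proof -
  have ip: "i < p" using assms R_sub by blast
  have ex: "\<exists>j<kR. sl ! j = i" using assms sl_props by (metis in_set_conv_nth)
  define j where "j = (SOME j. j < kR \<and> sl ! j = i)"
  have j: "j < kR" "sl ! j = i" unfolding j_def using someI_ex[OF ex] by auto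
  show ?thesis unfolding ext_def using ip ex j by (simp add: j_def[symmetric])
qed

lemma Ks_mean: "mean_on I kR Ks"
  unfolding mean_on_def
proof (intro ballI conjI)
  fix y assume y: "y \<in> cube I kR"
  have eX: "ext y \<in> X" by (rule ext_X[OF y])
  have km: "K (ext y) \<in> I \<and> Min (ext y ` {..<p}) \<le> K (ext y) \<and> K (ext y) \<le> Max (ext y ` {..<p})"
    using K_mean eX unfolding mean_on_def by blast
  show "Ks y \<in> I" unfolding Ks_def using km by simp
  have sub: "ext y ` {..<p} \<subseteq> y ` {..<kR}"
  proof
    fix v assume "v \<in> ext y ` {..<p}"
    then obtain i where i: "i < p" "v = ext y i" by auto
    then obtain j where "j < kR" "ext y i = y j" using ext_val by blast
    then show "v \<in> y ` {..<kR}" using i by auto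
  qed
  have ne: "ext y ` {..<p} \<noteq> {}" using ne_p by blast
  have "Min (y ` {..<kR}) \<le> Min (ext y ` {..<p})" by (rule Min_antimono[OF sub ne]) simp
  also have "\<dots> \<le> Ks y" unfolding Ks_def using km by simp
  finally show "Min (y ` {..<kR}) \<le> Ks y" .
  have "Ks y \<le> Max (ext y ` {..<p})" unfolding Ks_def using km by simp
  also have "\<dots> \<le> Max (y ` {..<kR})" by (rule Max_mono[OF sub ne]) simp
  finally show "Ks y \<le> Max (y ` {..<kR})" .
qed

lemma Ks_rep: assumes x: "x \<in> X" shows "K x = Ks (restrict (\<lambda>j. x (sl ! j)) {..<kR})"
proof -
  let ?y = "restrict (\<lambda>j. x (sl ! j)) {..<kR}"
  have "sl ! j \<in> R" if "j < kR" for j using nth_mem[of j sl] sl_props that by simp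
  then have "x (sl ! j) \<in> I" if "j < kR" for j using x R_sub that unfolding cube_iff by blast
  then have y: "?y \<in> cube I kR" unfolding cube_iff by simp
  show ?thesis unfolding Ks_def
    by (rule K_agree[OF x ext_X[OF y]]) (rule ext_agree[symmetric])
qed

end

theorem theorem3p1:
  fixes I :: "real set" and p :: nat and d :: "nat \<Rightarrow> nat"
    and \<alpha> :: "nat \<Rightarrow> nat \<Rightarrow> nat" and M :: "nat \<Rightarrow> (nat \<Rightarrow> real) \<Rightarrow> real"
  assumes I: "is_interval I"
    and p: "p \<ge> 1"
    and d: "\<And>i. i < p \<Longrightarrow> d i \<ge> 1"
    and \<alpha>: "\<And>i j. i < p \<Longrightarrow> j < d i \<Longrightarrow> \<alpha> i j < p"
    and mean: "\<And>i. i < p \<Longrightarrow> mean_on I (d i) (M i)"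
    and erg: "ergodic (root {..<p} (Ealpha d \<alpha> p)) (root_edges {..<p} (Ealpha d \<alpha> p))"
    and cont: "\<And>i. i < p \<Longrightarrow> continuous_on (cube I (d i)) (M i)"
    and strict: "\<And>i. i < p \<Longrightarrow> strict_mean_on I (d i) (M i)"
  shows "\<exists>K. continuous_on (cube I p) K \<and> mean_on I p K
           \<and> (\<forall>x\<in>cube I p. K (Malpha M d \<alpha> p x) = K x)
           \<and> (\<forall>x\<in>cube I p. \<forall>i<p. (\<lambda>n. (Malpha M d \<alpha> p ^^ n) x i) \<longlonglongrightarrow> K x)
           \<and> (\<exists>Ks. mean_on I (card (root {..<p} (Ealpha d \<alpha> p))) Ks \<and>
                (\<forall>x\<in>cube I p. K x = Ks (restrict
                    (\<lambda>j. x (sorted_list_of_set (root {..<p} (Ealpha d \<alpha> p)) ! j))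
                    {..<card (root {..<p} (Ealpha d \<alpha> p))})))
           \<and> (\<forall>K'. continuous_on (cube I p) K' \<and> mean_on I p K'
                  \<and> (\<forall>x\<in>cube I p. K' (Malpha M d \<alpha> p x) = K' x)
                  \<and> (\<forall>x\<in>cube I p. \<forall>i<p. (\<lambda>n. (Malpha M d \<alpha> p ^^ n) x i) \<longlonglongrightarrow> K' x)
                  \<longrightarrow> (\<forall>x\<in>cube I p. K' x = K x))"
proof -
  interpret mean_setup I p d \<alpha> M
    apply unfold_locales
    using assms by auto
  have Kc: "\<forall>x\<in>cube I p. \<forall>i<p. (\<lambda>n. (Malpha M d \<alpha> p ^^ n) x i) \<longlonglongrightarrow> K x"
    using K_coord by blast
  have Ksx: "\<exists>Ks. mean_on I (card (root {..<p} (Ealpha d \<alpha> p))) Ks \<and>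
                (\<forall>x\<in>cube I p. K x = Ks (restrict
                    (\<lambda>j. x (sorted_list_of_set (root {..<p} (Ealpha d \<alpha> p)) ! j))
                    {..<card (root {..<p} (Ealpha d \<alpha> p))}))"
    using Ks_mean Ks_rep unfolding sl_def kR_def by blast
  have uniq: "\<forall>K'. continuous_on (cube I p) K' \<and> mean_on I p K'
                  \<and> (\<forall>x\<in>cube I p. K' (Malpha M d \<alpha> p x) = K' x)
                  \<and> (\<forall>x\<in>cube I p. \<forall>i<p. (\<lambda>n. (Malpha M d \<alpha> p ^^ n) x i) \<longlonglongrightarrow> K' x)
                  \<longrightarrow> (\<forall>x\<in>cube I p. K' x = K x)"
  proof (intro allI impI ballI)
    fix K' x assume h: "continuous_on (cube I p) K' \<and> mean_on I p K'
                  \<and> (\<forall>x\<in>cube I p. K' (Malpha M d \<alpha> p x) = K' x)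
                  \<and> (\<forall>x\<in>cube I p. \<forall>i<p. (\<lambda>n. (Malpha M d \<alpha> p ^^ n) x i) \<longlonglongrightarrow> K' x)"
      and x: "x \<in> cube I p"
    have p0: "0 < p" using p by simp
    have "(\<lambda>n. (Malpha M d \<alpha> p ^^ n) x 0) \<longlonglongrightarrow> K' x" using h x p0 by blast
    then show "K' x = K x" using K_coord[OF x p0] by (rule LIMSEQ_unique)
  qed
  show ?thesis
    using K_cont K_mean K_inv Kc Ksx uniq by blast
qed

end
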